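(* For every $m\geq 1$ and every $\alpha=(\alpha_0,\dots,\alpha_{m-1})\in\mathbb{N}^m$, the function $n\mapsto u_\alpha(n)$ has a rational generating function; that is, there exist polynomials $P(x),Q(x)\in\mathbb{C}[x]$ with $Q(0)\neq 0$ such that $\sum_{n\geq 0}u_\alpha(n)x^n=P(x)/Q(x)$ as formal power series (equivalently, $u_\alpha(n)$ satisfies a linear recurrence with constant coefficients for all sufficiently large $n$).
   Context: $\mathbb{N}=\{0,1,2,\dots\}$. Stern's triangle is the array of integers $a(n,k)$, $n\geq 0$, $k\in\mathbb{Z}$, defined as follows. Row $n$ consists of $a(n,0),\dots,a(n,N_n)$ with $N_n=2^{n+1}-2$, and $a(n,k)=0$ if $k<0$ or $k>N_n$. Row $0$ is $a(0,0)=1$. Given row $n$ with $N=N_n$: $a(n+1,0)=1$, $a(n+1,2j+1)=a(n,j)$ for $0\leq j\leq N$, $a(n+1,2j+2)=a(n,j)+a(n,j+1)$ for $0\leq j\leq N-1$, and $a(n+1,2N+2)=1$. (Equivalently, $\sum_k a(n,k)x^k=\prod_{i=0}^{n-1}(1+x^{2^i}+x^{2\cdot 2^i})$.) For $\alpha=(\alpha_0,\dots,\alpha_{m-1})\in\mathbb{N}^m$ define $$u_\alpha(n)=\sum_{k\geq 0} a(n,k)^{\alpha_0}a(n,k+1)^{\alpha_1}\cdots a(n,k+m-1)^{\alpha_{m-1}}.$$ *)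

theory Defs
  imports "HOL-Computational_Algebra.Computational_Algebra"
begin

definition stern_N :: "nat \<Rightarrow> int" where
  "stern_N n = 2 ^ (n + 1) - 2"

fun stern_a :: "nat \<Rightarrow> int \<Rightarrow> nat" where
  "stern_a 0 k = (if k = 0 then 1 else 0)"
| "stern_a (Suc n) k =
     (if k < 0 \<or> k > stern_N (Suc n) then 0
      else if k = 0 then 1
      else if k = 2 * stern_N n + 2 then 1
      else if odd k then stern_a n ((k - 1) div 2)
      else stern_a n ((k - 2) div 2) + stern_a n ((k - 2) div 2 + 1))"

text \<open>u_alpha(n) = sum over k of prod_i a(n,k+i)^(alpha_i), alpha a list of length m.
  The sum is taken over the support 0..N_n of row n (all other terms vanish as soon as
  alpha is not the zero vector).\<close>
definition stern_u :: "nat list \<Rightarrow> nat \<Rightarrow> nat" where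
  "stern_u \<alpha> n = (\<Sum>k\<in>{0..nat (stern_N n)}.
       \<Prod>i<length \<alpha>. stern_a n (int k + int i) ^ (\<alpha> ! i))"

end

theory Submission
  imports Defs
begin

definition ratfps :: "complex fps set" where
  "ratfps = {f. \<exists>P Q. poly Q 0 \<noteq> 0 \<and> f = fps_of_poly P * inverse (fps_of_poly Q)}"

lemma ratfpsI: "poly Q 0 \<noteq> 0 \<Longrightarrow> f = fps_of_poly P * inverse (fps_of_poly Q) \<Longrightarrow> f \<in> ratfps"
  unfolding ratfps_def by blast

lemma fps_of_poly_0th: "fps_of_poly Q $ 0 = poly Q 0"
  by (simp add: poly_0_coeff_0)

lemma ratfps_poly: "fps_of_poly P \<in> ratfps"
  by (rule ratfpsI[of 1]) auto

lemma ratfps_const: "fps_const c \<in> ratfps"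
  using ratfps_poly[of "[:c:]"] by (simp add: fps_of_poly_const)

lemma ratfps_X: "fps_X \<in> ratfps"
  using ratfps_poly[of "[:0,1:]"] by (simp add: fps_of_poly_pCons)

lemma ratfps_add: assumes "f \<in> ratfps" "g \<in> ratfps" shows "f + g \<in> ratfps"
proof -
  obtain P Q where 1: "poly Q 0 \<noteq> 0" "f = fps_of_poly P * inverse (fps_of_poly Q)"
    using assms(1) unfolding ratfps_def by blast
  obtain P' Q' where 2: "poly Q' 0 \<noteq> 0" "g = fps_of_poly P' * inverse (fps_of_poly Q')"
    using assms(2) unfolding ratfps_def by blast
  have q: "inverse (fps_of_poly Q) * fps_of_poly Q = 1" "inverse (fps_of_poly Q') * fps_of_poly Q' = 1"
    using 1 2 by (auto intro!: inverse_mult_eq_1 simp: poly_0_coeff_0)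
  show ?thesis
  proof (rule ratfpsI[of "Q * Q'" _ "P * Q' + P' * Q"])
    show "poly (Q * Q') 0 \<noteq> 0" using 1 2 by simp
    have "fps_of_poly (P * Q' + P' * Q) * inverse (fps_of_poly (Q * Q'))
      = (fps_of_poly P * (inverse (fps_of_poly Q') * fps_of_poly Q') * inverse (fps_of_poly Q)
        + fps_of_poly P' * (inverse (fps_of_poly Q) * fps_of_poly Q) * inverse (fps_of_poly Q'))"
      by (simp add: fps_of_poly_add fps_of_poly_mult fps_inverse_mult algebra_simps)
    also have "\<dots> = f + g" using q 1 2 by simp
    finally show "f + g = fps_of_poly (P * Q' + P' * Q) * inverse (fps_of_poly (Q * Q'))" by simp
  qed
qed

lemma ratfps_mult: assumes "f \<in> ratfps" "g \<in> ratfps" shows "f * g \<in> ratfps"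
proof -
  obtain P Q where 1: "poly Q 0 \<noteq> 0" "f = fps_of_poly P * inverse (fps_of_poly Q)"
    using assms(1) unfolding ratfps_def by blast
  obtain P' Q' where 2: "poly Q' 0 \<noteq> 0" "g = fps_of_poly P' * inverse (fps_of_poly Q')"
    using assms(2) unfolding ratfps_def by blast
  show ?thesis
    by (rule ratfpsI[of "Q * Q'" _ "P * P'"]) (use 1 2 in \<open>simp_all add: fps_of_poly_mult fps_inverse_mult algebra_simps\<close>)
qed

lemma ratfps_uminus: assumes "f \<in> ratfps" shows "- f \<in> ratfps"
  using ratfps_mult[OF ratfps_const[of "-1"] assms] by (simp add: fps_const_neg[symmetric])

lemma ratfps_inverse: assumes "f \<in> ratfps" "f $ 0 \<noteq> 0" shows "inverse f \<in> ratfps"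
proof -
  obtain P Q where 1: "poly Q 0 \<noteq> 0" "f = fps_of_poly P * inverse (fps_of_poly Q)"
    using assms(1) unfolding ratfps_def by blast
  have "poly P 0 \<noteq> 0" using 1 assms(2) by (simp add: poly_0_coeff_0)
  then show ?thesis
    by (rule ratfpsI[of P _ Q]) (use 1 in \<open>simp add: fps_inverse_mult poly_0_coeff_0 fps_inverse_idempotent\<close>)
qed

lemma ratfps_sum: "(\<And>i. i \<in> A \<Longrightarrow> f i \<in> ratfps) \<Longrightarrow> sum f A \<in> ratfps"
  by (induction A rule: infinite_finite_induct)
     (auto intro: ratfps_add simp: ratfps_poly[of 0, simplified])


lemma system_ratfps:
  assumes "finite S"
  shows "(\<forall>i\<in>S. c i \<in> ratfps) \<Longrightarrow> (\<forall>i\<in>S. \<forall>j\<in>S. a i j \<in> ratfps) \<Longrightarrow>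
    (\<forall>i\<in>S. g i = c i + (\<Sum>j\<in>S. fps_X * a i j * g j)) \<Longrightarrow> \<forall>i\<in>S. g i \<in> ratfps"
  using assms
proof (induction S arbitrary: c a rule: finite_induct)
  case empty
  then show ?case by simp
next
  case (insert x S)
  define D where "D = 1 - fps_X * a x x"
  have D0: "D $ 0 = 1" by (simp add: D_def)
  have iD: "inverse D * D = 1" using D0 by (intro inverse_mult_eq_1) simp
  have axx: "a x x \<in> ratfps" using insert.prems(2) by blast
  have one: "(1::complex fps) \<in> ratfps" using ratfps_poly[of 1] by simp
  have "D \<in> ratfps" unfolding D_def diff_conv_add_uminus
    by (intro ratfps_add ratfps_uminus ratfps_mult ratfps_X one axx)
  then have iDr: "inverse D \<in> ratfps" by (rule ratfps_inverse) (simp add: D0)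
  define B where "B = c x + (\<Sum>j\<in>S. fps_X * a x j * g j)"
  have Pi: "g i = c i + (\<Sum>j\<in>insert x S. fps_X * a i j * g j)" if "i \<in> insert x S" for i
    using insert.prems(3) that by blast
  have hx: "g x = c x + (fps_X * a x x * g x + (\<Sum>j\<in>S. fps_X * a x j * g j))"
    by (rule trans[OF Pi[of x, OF insertI1]]) (simp add: sum.insert[OF insert.hyps])
  have "g x - fps_X * a x x * g x = c x + (fps_X * a x x * g x + (\<Sum>j\<in>S. fps_X * a x j * g j)) - fps_X * a x x * g x"
    using hx by (rule arg_cong[where f="\<lambda>t. t - fps_X * a x x * g x"])
  also have "\<dots> = B" by (simp add: B_def)
  finally have "D * g x = B" unfolding D_def by (simp add: algebra_simps)
  hence gx: "g x = inverse D * B"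
    by (metis iD mult.assoc mult_1)
  define c' where "c' i = c i + fps_X * a i x * inverse D * c x" for i
  define a' where "a' i j = a i j + a i x * inverse D * fps_X * a x j" for i j
  have eqS: "\<forall>i\<in>S. g i = c' i + (\<Sum>j\<in>S. fps_X * a' i j * g j)"
  proof
    fix i assume i: "i \<in> S"
    have "g i = c i + (fps_X * a i x * g x + (\<Sum>j\<in>S. fps_X * a i j * g j))"
      by (rule trans[OF Pi[of i, OF insertI2[OF i]]]) (simp add: sum.insert[OF insert.hyps])
    also have "\<dots> = c i + fps_X * a i x * inverse D * c x
        + (\<Sum>j\<in>S. fps_X * a i x * inverse D * (fps_X * a x j * g j)) + (\<Sum>j\<in>S. fps_X * a i j * g j)"
      unfolding gx B_def by (simp add: algebra_simps sum_distrib_left)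
    also have "\<dots> = c' i + (\<Sum>j\<in>S. fps_X * a' i j * g j)"
      unfolding c'_def a'_def by (simp add: algebra_simps sum.distrib)
    finally show "g i = c' i + (\<Sum>j\<in>S. fps_X * a' i j * g j)" .
  qed
  have c'r: "\<forall>i\<in>S. c' i \<in> ratfps" unfolding c'_def using insert.prems(1,2) iDr
    by (auto intro!: ratfps_add ratfps_mult ratfps_X)
  have a'r: "\<forall>i\<in>S. \<forall>j\<in>S. a' i j \<in> ratfps" unfolding a'_def using insert.prems(1,2) iDr
    by (auto intro!: ratfps_add ratfps_mult ratfps_X)
  have IH: "\<forall>i\<in>S. g i \<in> ratfps" using insert.IH[OF c'r a'r eqS] insert.hyps by blast
  have "g x \<in> ratfps" unfolding gx B_def using insert.prems(1,2) iDr IH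
    by (auto intro!: ratfps_add ratfps_mult ratfps_X ratfps_sum)
  with IH show ?case by blast
qed


lemma N_Suc: "stern_N (Suc n) = 2 * stern_N n + 2"
  by (simp add: stern_N_def)

lemma N_nonneg: "stern_N n \<ge> 0"
  by (simp add: stern_N_def)

lemma N_nat: "nat (stern_N n) + 2 = 2 ^ (n + 1)"
proof -
  have h: "stern_N n + 2 = 2 ^ (n + 1)" by (simp add: stern_N_def)
  have "int (nat (stern_N n) + 2) = int (2 ^ (n + 1))" using N_nonneg[of n] h by simp
  then show ?thesis by (simp only: of_nat_eq_iff)
qed

lemma a_out: "k < 0 \<or> k > stern_N n \<Longrightarrow> stern_a n k = 0"
  by (cases n) (auto simp: stern_N_def)

lemma a_0: "stern_a n 0 = 1"
proof (cases n)
  case (Suc m) with N_nonneg[of m] show ?thesis by (auto simp: N_Suc)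
qed simp

lemma a_N: "stern_a n (stern_N n) = 1"
proof (cases n)
  case (Suc m) with N_nonneg[of m] show ?thesis by (auto simp: N_Suc)
qed (simp add: stern_N_def)

lemma step_odd: "stern_a (Suc n) (2 * j + 1) = stern_a n j"
proof (cases "j < 0 \<or> j > stern_N n")
  case True
  then show ?thesis using a_out[of j n] N_Suc[of n] by auto
next
  case False
  then show ?thesis using N_Suc[of n] by auto
qed

lemma step_even: "stern_a (Suc n) (2 * j) = stern_a n (j - 1) + stern_a n j"
proof -
  consider "j < 0" | "j = 0" | "j = stern_N n + 1" | "j > stern_N n + 1" | "0 < j \<and> j \<le> stern_N n"
    by linarith
  then show ?thesis
  proof cases
    case 1 then show ?thesis using a_out[of j n] a_out[of "j-1" n] by auto
  next
    case 2 then show ?thesis using a_out[of "-1" n] a_0[of n] N_nonneg[of "Suc n"] by simp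
  next
    case 3 then show ?thesis using a_out[of "j" n] a_N[of n] N_Suc[of n] N_nonneg[of n] by auto
  next
    case 4 then show ?thesis using a_out[of "j" n] a_out[of "j-1" n] N_Suc[of n] by auto
  next
    case 5
    have "\<not> odd (2 * j)" by simp
    moreover have "(2 * j - 2) div 2 = j - 1" by simp
    ultimately show ?thesis using 5 N_Suc[of n] by auto
  qed
qed

definition opts :: "int \<Rightarrow> int \<Rightarrow> int list" where
  "opts e q = (if odd (e + q) then [(e + q - 1) div 2] else [(e + q) div 2 - 1, (e + q) div 2])"

lemma step_opts: "stern_a (Suc n) (2 * j + e + q) = sum_list (map (\<lambda>p. stern_a n (j + p)) (opts e q))"
proof (cases "odd (e + q)")
  case True
  then obtain t where t: "e + q = 2 * t + 1" by (metis oddE)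
  have eq: "2 * j + e + q = 2 * (j + t) + 1" using t by simp
  have o: "opts e q = [t]" using t True by (simp add: opts_def)
  show ?thesis unfolding eq o by (simp only: step_odd) simp
next
  case False
  then obtain t where t: "e + q = 2 * t" by (metis evenE)
  have eq: "2 * j + e + q = 2 * (j + t)" using t by simp
  have o: "opts e q = [t - 1, t]" using t False by (simp add: opts_def)
  show ?thesis unfolding eq o by (simp only: step_even) (simp add: algebra_simps)
qed

lemma my_sum_list_concat: "sum_list (concat xss) = sum_list (map sum_list xss)"
  by (induction xss) simp_all

lemma prod_sum_lists:
  "prod_list (map (\<lambda>xs. sum_list (map f xs)) xss) =
   sum_list (map (\<lambda>ys. prod_list (map f ys)) (product_lists xss))"
  for f :: "'a \<Rightarrow> 'b::comm_semiring_1"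
proof (induction xss)
  case Nil
  then show ?case by simp
next
  case (Cons xs xss)
  show ?case
    by (simp add: Cons my_sum_list_concat map_concat o_def sum_list_const_mult sum_list_mult_const)
qed

definition G :: "int list \<Rightarrow> nat \<Rightarrow> nat" where
  "G l n = (\<Sum>k<2 ^ (n + 1). prod_list (map (\<lambda>q. stern_a n (int k + q)) l))"

definition expand :: "int list \<Rightarrow> int list list" where
  "expand l = product_lists (map (opts 0) l) @ product_lists (map (opts 1) l)"

lemma sum_double: "(\<Sum>k<2 * N. f k) = (\<Sum>j<N. f (2 * j) + f (2 * j + 1))" for f :: "nat \<Rightarrow> 'b::comm_monoid_add"
  by (induction N) (simp_all add: add.assoc)

lemma sum_sum_list_swap: "(\<Sum>j\<in>A. sum_list (map (h j) L)) = sum_list (map (\<lambda>y. \<Sum>j\<in>A. h j y) L)"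
  for h :: "_ \<Rightarrow> _ \<Rightarrow> 'b::comm_monoid_add"
  by (induction L) (simp_all add: sum.distrib)

lemma G_step: "G l (Suc n) = sum_list (map (\<lambda>l'. G l' n) (expand l))"
proof -
  define F where "F k = prod_list (map (\<lambda>q. stern_a (Suc n) (int k + q)) l)" for k
  have Fe: "F (2 * j + e) = sum_list (map (\<lambda>ys. prod_list (map (\<lambda>p. stern_a n (int j + p)) ys))
              (product_lists (map (opts (int e)) l)))" for j e
  proof -
    have "F (2 * j + e) = prod_list (map (\<lambda>q. sum_list (map (\<lambda>p. stern_a n (int j + p)) (opts (int e) q))) l)"
      unfolding F_def using step_opts[of n "int j" "int e"] by (simp add: algebra_simps)
    also have "\<dots> = prod_list (map (\<lambda>xs. sum_list (map (\<lambda>p. stern_a n (int j + p)) xs)) (map (opts (int e)) l))"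
      by (simp add: o_def)
    finally show ?thesis by (simp only: prod_sum_lists)
  qed
  have "G l (Suc n) = (\<Sum>k<2 * 2 ^ (n + 1). F k)" unfolding G_def F_def by simp
  also have "\<dots> = (\<Sum>j<2 ^ (n + 1). F (2 * j) + F (2 * j + 1))" by (rule sum_double)
  also have "\<dots> = sum_list (map (\<lambda>l'. G l' n) (expand l))"
    unfolding Fe[of _ 1] Fe[of _ 0, simplified] expand_def G_def by (simp add: sum.distrib sum_sum_list_swap)
  finally show ?thesis .
qed


definition SS :: "nat \<Rightarrow> int \<Rightarrow> int list set" where
  "SS d M = {l. set l \<subseteq> {-1..M} \<and> length l = d}"

lemma SS_finite: "finite (SS d M)"
  unfolding SS_def by (rule finite_lists_length_eq) simp

lemma opts_bound: "M \<ge> 1 \<Longrightarrow> q \<in> {-1..M} \<Longrightarrow> e \<in> {0, 1} \<Longrightarrow> set (opts e q) \<subseteq> {-1..M}"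
  unfolding opts_def by auto

lemma expand_in:
  assumes M: "M \<ge> 1" and l: "l \<in> SS d M"
  shows "set (expand l) \<subseteq> SS d M"
proof
  fix ys assume "ys \<in> set (expand l)"
  then obtain e where e: "e \<in> {0, 1}" and ys: "ys \<in> set (product_lists (map (opts e) l))"
    unfolding expand_def by auto
  have la: "list_all2 (\<lambda>x ys. x \<in> set ys) ys (map (opts e) l)"
    using ys by (simp add: product_lists_set)
  have len: "length ys = length l" using list_all2_lengthD[OF la] by simp
  have "set ys \<subseteq> {-1..M}"
  proof
    fix x assume "x \<in> set ys"
    then obtain i where i: "i < length ys" "x = ys ! i" by (auto simp: in_set_conv_nth)
    have "x \<in> set (opts e (l ! i))" using la i len by (auto simp: list_all2_conv_all_nth)
    have "l ! i \<in> set l" using i len by simp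
    moreover have "set l \<subseteq> {-1..M}" using l unfolding SS_def by simp
    ultimately have "l ! i \<in> {-1..M}" by blast
    moreover note \<open>x \<in> set (opts e (l ! i))\<close>
    ultimately show "x \<in> {-1..M}" using opts_bound[OF M _ e] by blast
  qed
  then show "ys \<in> SS d M" using len l unfolding SS_def by simp
qed

lemma fps_unfold: "Abs_fps f = fps_const (f 0) + fps_X * Abs_fps (\<lambda>n. f (Suc n))"
  for f :: "nat \<Rightarrow> complex"
proof (rule fps_ext)
  fix n show "Abs_fps f $ n = (fps_const (f 0) + fps_X * Abs_fps (\<lambda>n. f (Suc n))) $ n"
    by (cases n) simp_all
qed

lemma G_ratfps:
  assumes M: "M \<ge> 1" and l: "l \<in> SS d M"
  shows "Abs_fps (\<lambda>n. of_nat (G l n) :: complex) \<in> ratfps"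
proof -
  define g where "g l = Abs_fps (\<lambda>n. of_nat (G l n) :: complex)" for l
  have "\<forall>i\<in>SS d M. g i = fps_const (of_nat (G i 0)) +
      (\<Sum>j\<in>SS d M. fps_X * fps_const (of_nat (count_list (expand i) j)) * g j)"
  proof
    fix i assume i: "i \<in> SS d M"
    have rec: "G i (Suc n) = (\<Sum>j\<in>SS d M. count_list (expand i) j * G j n)" for n
      unfolding G_step by (rule sum_list_map_eq_sum_count2[OF expand_in[OF M i] SS_finite])
    have eq: "Abs_fps (\<lambda>n. of_nat (G i (Suc n)) :: complex) =
        (\<Sum>j\<in>SS d M. fps_const (of_nat (count_list (expand i) j)) * g j)"
    proof (rule fps_ext)
      fix n
      show "Abs_fps (\<lambda>n. of_nat (G i (Suc n)) :: complex) $ n =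
        (\<Sum>j\<in>SS d M. fps_const (of_nat (count_list (expand i) j)) * g j) $ n"
        unfolding rec fps_sum_nth g_def by simp
    qed
    have "g i = fps_const (of_nat (G i 0)) + fps_X * Abs_fps (\<lambda>n. of_nat (G i (Suc n)))"
      unfolding g_def by (rule fps_unfold)
    also have "\<dots> = fps_const (of_nat (G i 0)) + fps_X * (\<Sum>j\<in>SS d M. fps_const (of_nat (count_list (expand i) j)) * g j)"
      by (simp only: eq)
    also have "\<dots> = fps_const (of_nat (G i 0)) +
      (\<Sum>j\<in>SS d M. fps_X * fps_const (of_nat (count_list (expand i) j)) * g j)"
      by (simp only: sum_distrib_left mult.assoc)
    finally show "g i = fps_const (of_nat (G i 0)) +
      (\<Sum>j\<in>SS d M. fps_X * fps_const (of_nat (count_list (expand i) j)) * g j)" .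
  qed
  note sys = system_ratfps[OF SS_finite, where c = "\<lambda>i. fps_const (of_nat (G i 0))"
        and a = "\<lambda>i j. fps_const (of_nat (count_list (expand i) j))", OF _ _ this]
  have "\<forall>i\<in>SS d M. g i \<in> ratfps"
    by (rule sys) (simp_all add: ratfps_const)
  then show ?thesis using l unfolding g_def by blast
qed


lemma prod_list_concat_map: "prod_list (map f (concat (map h xs))) = prod_list (map (\<lambda>x. prod_list (map f (h x))) xs)"
  by (induction xs) simp_all

lemma prod_list_upt: "prod_list (map \<phi> [0..<m]) = (\<Prod>i<m. \<phi> i)"
  by (induction m) (simp_all add: mult.commute)

definition l0 :: "nat list \<Rightarrow> int list" where
  "l0 \<alpha> = concat (map (\<lambda>i. replicate (\<alpha> ! i) (int i)) [0..<length \<alpha>])"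

lemma l0_prod: "(\<Prod>i<length \<alpha>. stern_a n (int k + int i) ^ (\<alpha> ! i)) =
   prod_list (map (\<lambda>q. stern_a n (int k + q)) (l0 \<alpha>))"
  unfolding l0_def prod_list_concat_map by (simp add: prod_list_upt)

lemma l0_set: "set (l0 \<alpha>) \<subseteq> {0..int (length \<alpha>) - 1}"
  unfolding l0_def by auto

lemma prod_list_zero: "xs \<noteq> [] \<Longrightarrow> (\<And>q. q \<in> set xs \<Longrightarrow> f q = (0::nat)) \<Longrightarrow> prod_list (map f xs) = 0"
  by (cases xs) auto

lemma u_G: "stern_u \<alpha> n + (if l0 \<alpha> = [] then 1 else 0) = G (l0 \<alpha>) n"
proof -
  define T where "T k = prod_list (map (\<lambda>q. stern_a n (int k + q)) (l0 \<alpha>))" for k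
  have last: "T (Suc (nat (stern_N n))) = (if l0 \<alpha> = [] then 1 else 0)"
  proof (cases "l0 \<alpha> = []")
    case False
    have "stern_a n (int (Suc (nat (stern_N n))) + q) = 0" if "q \<in> set (l0 \<alpha>)" for q
    proof (rule a_out)
      have "q \<ge> 0" using l0_set[of \<alpha>] that by auto
      then show "int (Suc (nat (stern_N n))) + q < 0 \<or> stern_N n < int (Suc (nat (stern_N n))) + q"
        using N_nonneg[of n] by simp
    qed
    then show ?thesis unfolding T_def using False by (simp add: prod_list_zero)
  qed (simp add: T_def)
  have "G (l0 \<alpha>) n = (\<Sum>k<Suc (Suc (nat (stern_N n))). T k)"
    unfolding G_def T_def using N_nat[of n] by simp
  also have "\<dots> = (\<Sum>k\<in>{0..nat (stern_N n)}. T k) + T (Suc (nat (stern_N n)))"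
    by (simp add: atLeast0AtMost lessThan_Suc_atMost)
  also have "(\<Sum>k\<in>{0..nat (stern_N n)}. T k) = stern_u \<alpha> n"
    unfolding stern_u_def T_def l0_prod ..
  finally show ?thesis using last by simp
qed

lemma const_one_ratfps: "Abs_fps (\<lambda>_. 1 :: complex) \<in> ratfps"
proof -
  have "\<forall>i\<in>{()}. (\<lambda>_. Abs_fps (\<lambda>_. 1 :: complex)) i \<in> ratfps"
  proof (rule system_ratfps[where c = "\<lambda>_. 1" and a = "\<lambda>_ _. 1"])
    show "\<forall>i\<in>{()}. (\<lambda>_. Abs_fps (\<lambda>_. 1 :: complex)) i =
        1 + (\<Sum>j\<in>{()}. fps_X * 1 * (\<lambda>_. Abs_fps (\<lambda>_. 1 :: complex)) j)"
      using fps_unfold[of "\<lambda>_. 1"] by simp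
  qed (auto intro: ratfps_const[of 1, simplified])
  then show ?thesis by simp
qed

theorem theorem2p1:
  fixes \<alpha> :: "nat list"
  assumes "length \<alpha> \<ge> 1"
  shows "\<exists>P Q :: complex poly. poly Q 0 \<noteq> 0 \<and>
           Abs_fps (\<lambda>n. of_nat (stern_u \<alpha> n)) = fps_of_poly P / fps_of_poly Q"
proof -
  define M where "M = max (int (length \<alpha>) - 1) 1"
  have M: "M \<ge> 1" unfolding M_def by simp
  have l: "l0 \<alpha> \<in> SS (length (l0 \<alpha>)) M"
    using l0_set[of \<alpha>] unfolding SS_def M_def by force
  have Gr: "Abs_fps (\<lambda>n. of_nat (G (l0 \<alpha>) n) :: complex) \<in> ratfps"
    by (rule G_ratfps[OF M l])
  define h where "h = (if l0 \<alpha> = [] then Abs_fps (\<lambda>_. 1 :: complex) else 0)"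
  have hr: "h \<in> ratfps" unfolding h_def using const_one_ratfps ratfps_const[of 0] by simp
  have eq: "Abs_fps (\<lambda>n. of_nat (stern_u \<alpha> n) :: complex) = Abs_fps (\<lambda>n. of_nat (G (l0 \<alpha>) n)) + - h"
  proof (rule fps_ext)
    fix n
    have "of_nat (G (l0 \<alpha>) n) = (of_nat (stern_u \<alpha> n + (if l0 \<alpha> = [] then 1 else 0)) :: complex)"
      by (simp only: u_G)
    then show "Abs_fps (\<lambda>n. of_nat (stern_u \<alpha> n) :: complex) $ n = (Abs_fps (\<lambda>n. of_nat (G (l0 \<alpha>) n)) + - h) $ n"
      unfolding h_def by simp
  qed
  have "Abs_fps (\<lambda>n. of_nat (stern_u \<alpha> n) :: complex) \<in> ratfps"
    unfolding eq by (intro ratfps_add ratfps_uminus Gr hr)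
  then obtain P Q where PQ: "poly Q 0 \<noteq> 0"
    "Abs_fps (\<lambda>n. of_nat (stern_u \<alpha> n) :: complex) = fps_of_poly P * inverse (fps_of_poly Q)"
    unfolding ratfps_def by blast
  have "fps_of_poly Q $ 0 \<noteq> 0" using PQ(1) by (simp add: poly_0_coeff_0)
  then have "fps_of_poly P / fps_of_poly Q = fps_of_poly P * inverse (fps_of_poly Q)"
    by (rule fps_divide_unit)
  with PQ show ?thesis by metis
qed

end
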